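(* Let $n\in\{2,3\}$, $\gamma\in[1,n/2]$, $\gamma(n)=\frac{n(n-1)-n\gamma}{n-\gamma}$, and let $\rho\ge0$ on $\mathbb{R}^n$ satisfy $\|\rho\|_{L^1}+\|\rho\|_{L^\gamma}\le C_0$ if $\gamma>1$, or $\|\rho\|_{L^1}+\|\rho\ln(1+\rho)\|_{L^1}\le C_0$ if $\gamma=1$. Let $\alpha\in(0,1)$ with $\gamma(n)-n+1+\alpha<0$, let $\psi$ be a nonnegative $C^\infty$ function with compact support in $B_R$, and let $$\Omega=\{x\in B_R:\ \mathcal{M}\rho(s,x)\le s^{\gamma(n)+\alpha}\ \text{for } s\ge0\}.$$ Then $$\|I_1(\psi\rho)\|_{L^p(\Omega)}\le C(\gamma,n,\alpha)\quad\text{with}\quad p=\gamma\frac{\gamma(n)-n+\alpha}{\gamma(n)-n+1+\alpha}>n,$$ where $C(\gamma,n,\alpha)$ depends only on $\gamma,n,\alpha$ (and the bound $C_0$, and $R$).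
   Context: $\mathcal{M}\rho(s,x)=\int_{|x-y|\le s}\rho(y)dy$; $I_1f(x)=\int_{\mathbb{R}^n}|x-y|^{1-n}f(y)dy$; $B_R$ is the ball of radius $R$ centred at $0$. *)

theory Defs
  imports "HOL-Analysis.Analysis"
begin

definition gamma_n :: "real \<Rightarrow> real \<Rightarrow> real" where
  "gamma_n n g = (n * (n - 1) - n * g) / (n - g)"

text \<open>C-infinity (smooth) real-valued functions on a Euclidean space:
  differentiable everywhere, and every directional derivative is again smooth.\<close>
coinductive smooth_fun :: "('a::euclidean_space \<Rightarrow> real) \<Rightarrow> bool" where
  "(\<forall>x. f differentiable (at x)) \<Longrightarrow>
   (\<forall>v. smooth_fun (\<lambda>x. frechet_derivative f (at x) v)) \<Longrightarrow> smooth_fun f"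

definition maxM :: "('a::euclidean_space \<Rightarrow> real) \<Rightarrow> real \<Rightarrow> 'a \<Rightarrow> ennreal" where
  "maxM \<rho> s x = (\<integral>\<^sup>+ y \<in> cball x s. ennreal (\<rho> y) \<partial>lborel)"

definition I1 :: "('a::euclidean_space \<Rightarrow> real) \<Rightarrow> 'a \<Rightarrow> ennreal" where
  "I1 f x = (\<integral>\<^sup>+ y. ennreal (norm (x - y) powr (1 - real DIM('a)) * f y) \<partial>lborel)"

definition Lp_norm_on :: "'a::euclidean_space set \<Rightarrow> real \<Rightarrow> ('a \<Rightarrow> ennreal) \<Rightarrow> ennreal" where
  "Lp_norm_on S p f =
     (let J = (\<integral>\<^sup>+ x \<in> S. ennreal (enn2real (f x) powr p) \<partial>lborel) in
      if (AE x in lborel. x \<in> S \<longrightarrow> f x < \<infinity>) \<and> J < \<infinity>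
      then ennreal (enn2real J powr (1 / p)) else \<infinity>)"

end

theory Submission
  imports Defs
begin

lemma dyadic_ex:
  fixes x :: real assumes "1 \<le> x"
  shows "\<exists>j::nat. 2 powr real j \<le> x \<and> x < 2 powr (real j + 1)"
proof -
  define m where "m = floor (log 2 x)"
  have l0: "0 \<le> log 2 x" using assms by simp
  hence m0: "0 \<le> m" unfolding m_def by simp
  have "real_of_int m \<le> log 2 x" "log 2 x < real_of_int m + 1" unfolding m_def by linarith+
  hence "2 powr real_of_int m \<le> 2 powr log 2 x" "2 powr log 2 x < 2 powr (real_of_int m + 1)"
    by (auto intro: powr_mono powr_less_mono)
  moreover have "2 powr log 2 x = x" using assms by simp
  moreover have "real (nat m) = real_of_int m" using m0 by simp
  ultimately show ?thesis by (intro exI[of _ "nat m"]) auto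
qed

lemma ennreal_term_le_suminf:
  fixes f :: "nat \<Rightarrow> ennreal"
  shows "f j \<le> (\<Sum>i. f i)"
proof (rule ccontr)
  assume "\<not> f j \<le> (\<Sum>i. f i)"
  hence "(\<Sum>i. f i) < f j" by simp
  hence "f j < f j" by (rule ennreal_suminf_lessD)
  thus False by simp
qed

lemma ennreal_suminf_mono:
  fixes f g :: "nat \<Rightarrow> ennreal"
  shows "(\<And>i. f i \<le> g i) \<Longrightarrow> (\<Sum>i. f i) \<le> (\<Sum>i. g i)"
  by (intro suminf_le) auto

lemma near_series:
  fixes e r d :: real assumes e: "e \<le> 0" and r: "0 < r" and d: "0 \<le> d"
  shows "ennreal (d powr e * indicator {..<r} d)
    \<le> (\<Sum>j. ennreal ((r * 2 powr (-(real j+1))) powr e) * indicator {..r * 2 powr (-real j)} d)"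
proof (cases "d = 0 \<or> r \<le> d")
  case True thus ?thesis by (auto simp: indicator_def)
next
  case False
  hence d0: "0 < d" and dr: "d < r" using d by auto
  obtain j :: nat where j1: "2 powr real j \<le> r / d" and j2: "r / d < 2 powr (real j + 1)"
    using dyadic_ex[of "r/d"] d0 dr by auto
  have p1: "2 powr (-real j) = 1 / 2 powr real j" "2 powr (-(real j + 1)) = 1 / 2 powr (real j + 1)"
    by (simp_all add: powr_minus_divide del: minus_add_distrib)
  have a: "r * 2 powr (-(real j+1)) < d" using j2 d0 unfolding p1 by (simp add: field_simps)
  have b: "d \<le> r * 2 powr (-real j)" using j1 d0 unfolding p1 by (simp add: field_simps)
  have pos: "0 < r * 2 powr (-(real j+1))" using r by simp
  have "d powr e \<le> (r * 2 powr (-(real j+1))) powr e"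
    using powr_mono2'[OF e pos] a by simp
  hence "ennreal (d powr e * indicator {..<r} d)
      \<le> ennreal ((r * 2 powr (-(real j+1))) powr e) * indicator {..r * 2 powr (-real j)} d"
    using dr b by (auto simp: indicator_def intro: ennreal_leI)
  also have "\<dots> \<le> (\<Sum>j. ennreal ((r * 2 powr (-(real j+1))) powr e) * indicator {..r * 2 powr (-real j)} d)"
    by (rule ennreal_term_le_suminf)
  finally show ?thesis .
qed

lemma far_series:
  fixes e r d :: real assumes e: "e \<le> 0" and r: "0 < r"
  shows "ennreal (d powr e * indicator {r..} d)
    \<le> (\<Sum>j. ennreal ((r * 2 powr (real j)) powr e) * indicator {..r * 2 powr (real j + 1)} d)"
proof (cases "r \<le> d")
  case False thus ?thesis by (auto simp: indicator_def)
next
  case True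
  hence d0: "0 < d" using r by auto
  obtain j :: nat where j1: "2 powr real j \<le> d / r" and j2: "d / r < 2 powr (real j + 1)"
    using dyadic_ex[of "d/r"] r True by auto
  have a: "r * 2 powr (real j) \<le> d" using j1 r by (simp add: field_simps)
  have b: "d \<le> r * 2 powr (real j + 1)" using j2 r by (simp add: field_simps)
  have pos: "0 < r * 2 powr (real j)" using r by simp
  have "d powr e \<le> (r * 2 powr (real j)) powr e"
    using powr_mono2'[OF e pos] a by simp
  hence "ennreal (d powr e * indicator {r..} d)
      \<le> ennreal ((r * 2 powr (real j)) powr e) * indicator {..r * 2 powr (real j + 1)} d"
    using True b by (auto simp: indicator_def intro: ennreal_leI)
  also have "\<dots> \<le> (\<Sum>j. ennreal ((r * 2 powr (real j)) powr e) * indicator {..r * 2 powr (real j + 1)} d)"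
    by (rule ennreal_term_le_suminf)
  finally show ?thesis .
qed

lemma pow2_scale: "0 < (r::real) \<Longrightarrow> (r * 2 powr u) powr w = r powr w * 2 powr (u*w)"
  by (simp add: powr_mult powr_powr)

lemma two_powr_neg_nat: "2 powr (- real j) = (1/2::real) ^ j"
  by (simp add: powr_minus powr_realpow power_one_over inverse_eq_divide)

lemma kernel_vol:
  fixes z :: "'a::euclidean_space" and r :: real assumes r: "0 < r"
  shows "(\<integral>\<^sup>+x. ennreal (norm (x - z) powr (1 - real DIM('a)) * indicator {..<r} (norm (x - z))) \<partial>lborel)
     \<le> ennreal (unit_ball_vol (DIM('a)) * 2 ^ DIM('a) * r)"
proof -
  define n where "n = real DIM('a)"
  define e where "e = 1 - n"
  have n1: "1 \<le> n" unfolding n_def by (simp add: DIM_positive Suc_leI)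
  have e: "e \<le> 0" using n1 unfolding e_def by simp
  define V where "V = unit_ball_vol (DIM('a))"
  have V0: "0 \<le> V" unfolding V_def by (simp add: unit_ball_vol_nonneg)
  define a where "a j = (r * 2 powr (-(real j+1))) powr e" for j :: nat
  define s where "s j = r * 2 powr (-real j)" for j :: nat
  have s0: "0 < s j" for j unfolding s_def using r by simp
  have "(\<integral>\<^sup>+x. ennreal (norm (x - z) powr e * indicator {..<r} (norm (x - z))) \<partial>lborel)
      \<le> (\<integral>\<^sup>+x. (\<Sum>j. ennreal (a j) * indicator (cball z (s j)) x) \<partial>lborel)"
  proof (rule nn_integral_mono)
    fix x :: 'a
    have "indicator {..s j} (norm (x - z)) = (indicator (cball z (s j)) x :: ennreal)" for j
      by (simp add: indicator_def dist_norm norm_minus_commute)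
    thus "ennreal (norm (x - z) powr e * indicator {..<r} (norm (x - z)))
        \<le> (\<Sum>j. ennreal (a j) * indicator (cball z (s j)) x)"
      using near_series[OF e r, of "norm (x - z)"] unfolding a_def s_def by simp
  qed
  also have "\<dots> = (\<Sum>j. \<integral>\<^sup>+x. ennreal (a j) * indicator (cball z (s j)) x \<partial>lborel)"
    by (rule nn_integral_suminf, rule borel_measurable_times_ennreal, simp, rule borel_measurable_indicator, simp)
  also have "\<dots> = (\<Sum>j. ennreal (a j) * emeasure lborel (cball z (s j)))"
    by (simp add: nn_integral_cmult_indicator)
  also have "\<dots> = (\<Sum>j. ennreal (V * r * 2 powr (n - 1) * (1/2)^j))"
  proof (rule suminf_cong)
    fix j
    have eq: "a j * (V * s j ^ DIM('a)) = V * r * 2 powr (n - 1) * (1/2)^j"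
    proof -
      have "s j ^ DIM('a) = s j powr n" unfolding n_def using s0[of j] by (simp add: powr_realpow)
      also have "\<dots> = r powr n * 2 powr (-real j * n)" unfolding s_def using r by (rule pow2_scale)
      finally have 1: "s j ^ DIM('a) = r powr n * 2 powr (-real j * n)" .
      have 2: "a j = r powr e * 2 powr (-(real j+1) * e)" unfolding a_def using r by (rule pow2_scale)
      have eq: "a j * (V * s j ^ DIM('a)) = V * (r powr e * r powr n) * (2 powr (-(real j+1) * e) * 2 powr (-real j * n))"
        unfolding 1 2 by (simp add: ac_simps)
      also have "\<dots> = V * r powr (e + n) * 2 powr (-(real j+1) * e + -real j * n)"
        by (simp only: powr_add)
      also have "e + n = 1" unfolding e_def by simp
      also have "-(real j+1) * e + -real j * n = (n - 1) + (- real j)" unfolding e_def by (simp add: algebra_simps)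
      also have "2 powr ((n - 1) + (- real j)) = 2 powr (n - 1) * (1/2)^j"
        by (simp only: powr_add two_powr_neg_nat)
      finally show ?thesis using r by (simp only: powr_one)
    qed
    have "0 \<le> a j" unfolding a_def by simp
    have "ennreal (a j) * emeasure lborel (cball z (s j)) = ennreal (a j) * ennreal (V * s j ^ DIM('a))"
      using s0[of j] unfolding V_def by (subst emeasure_cball) auto
    also have "\<dots> = ennreal (a j * (V * s j ^ DIM('a)))"
      using \<open>0 \<le> a j\<close> V0 s0[of j] by (simp add: ennreal_mult)
    finally show "ennreal (a j) * emeasure lborel (cball z (s j)) = ennreal (V * r * 2 powr (n - 1) * (1/2)^j)"
      unfolding eq .
  qed
  also have "\<dots> = ennreal (\<Sum>j. V * r * 2 powr (n - 1) * (1/2)^j)"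
    using V0 r by (intro suminf_ennreal2) (auto intro!: summable_mult summable_geometric)
  also have "(\<Sum>j. V * r * 2 powr (n - 1) * (1/2::real)^j) = V * r * 2 powr (n - 1) * 2"
    by (subst suminf_mult) (auto simp: suminf_geometric summable_geometric)
  also have "\<dots> = V * 2 ^ DIM('a) * r"
  proof -
    have "2 powr (n - 1) * 2 = 2 powr n" by (simp add: powr_diff)
    also have "\<dots> = 2 ^ DIM('a)" unfolding n_def by (simp add: powr_realpow)
    finally show ?thesis by (simp add: ac_simps)
  qed
  finally show ?thesis unfolding e_def n_def V_def .
qed

lemma far_bound:
  fixes x :: "'a::euclidean_space" and \<rho> :: "'a \<Rightarrow> real" and \<beta> r :: real
  assumes rho: "\<rho> \<in> borel_measurable lborel" and nn: "\<forall>y. 0 \<le> \<rho> y"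
    and r: "0 < r" and delta: "\<beta> + 1 - real DIM('a) < 0"
    and M: "\<forall>s\<ge>0. maxM \<rho> s x \<le> ennreal (s powr \<beta>)"
  shows "(\<integral>\<^sup>+y. ennreal (norm (x - y) powr (1 - real DIM('a)) * indicator {r..} (norm (x - y)) * \<rho> y) \<partial>lborel)
    \<le> ennreal (2 powr \<beta> / (1 - 2 powr (\<beta> + 1 - real DIM('a))) * r powr (\<beta> + 1 - real DIM('a)))"
proof -
  define n where "n = real DIM('a)"
  define e where "e = 1 - n"
  define \<epsilon> where "\<epsilon> = \<beta> + 1 - n"
  have n1: "1 \<le> n" unfolding n_def by (simp add: DIM_positive Suc_leI)
  have e: "e \<le> 0" using n1 unfolding e_def by simp
  have eps: "\<epsilon> < 0" using delta unfolding \<epsilon>_def n_def .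
  define a where "a j = (r * 2 powr (real j)) powr e" for j :: nat
  define s where "s j = r * 2 powr (real j + 1)" for j :: nat
  have s0: "0 < s j" for j unfolding s_def using r by simp
  have "(\<integral>\<^sup>+y. ennreal (norm (x - y) powr e * indicator {r..} (norm (x - y)) * \<rho> y) \<partial>lborel)
      \<le> (\<integral>\<^sup>+y. (\<Sum>j. ennreal (a j) * (ennreal (\<rho> y) * indicator (cball x (s j)) y)) \<partial>lborel)"
  proof (rule nn_integral_mono)
    fix y :: 'a
    have ind: "indicator {..s j} (norm (x - y)) = (indicator (cball x (s j)) y :: ennreal)" for j
      by (simp add: indicator_def dist_norm)
    have "ennreal (norm (x - y) powr e * indicator {r..} (norm (x - y)) * \<rho> y)
       = ennreal (norm (x - y) powr e * indicator {r..} (norm (x - y))) * ennreal (\<rho> y)"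
      using nn by (simp add: ennreal_mult)
    also have "\<dots> \<le> (\<Sum>j. ennreal (a j) * indicator (cball x (s j)) y) * ennreal (\<rho> y)"
      using far_series[OF e r, of "norm (x - y)"] unfolding a_def s_def ind[unfolded s_def]
      by (intro mult_right_mono) auto
    also have "\<dots> = (\<Sum>j. ennreal (a j) * (ennreal (\<rho> y) * indicator (cball x (s j)) y))"
      by (simp add: ac_simps)
    finally show "ennreal (norm (x - y) powr e * indicator {r..} (norm (x - y)) * \<rho> y)
        \<le> (\<Sum>j. ennreal (a j) * (ennreal (\<rho> y) * indicator (cball x (s j)) y))" .
  qed
  also have "\<dots> = (\<Sum>j. \<integral>\<^sup>+y. ennreal (a j) * (ennreal (\<rho> y) * indicator (cball x (s j)) y) \<partial>lborel)"
    using rho by (intro nn_integral_suminf) (auto intro!: borel_measurable_times_ennreal borel_measurable_indicator)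
  also have "\<dots> = (\<Sum>j. ennreal (a j) * maxM \<rho> (s j) x)"
    using rho unfolding maxM_def
    by (intro suminf_cong nn_integral_cmult) (auto intro!: borel_measurable_times_ennreal borel_measurable_indicator)
  also have "\<dots> \<le> (\<Sum>j. ennreal (a j) * ennreal (s j powr \<beta>))"
    using M s0 by (intro ennreal_suminf_mono mult_left_mono) (auto simp: less_imp_le)
  also have "\<dots> = (\<Sum>j. ennreal (r powr \<epsilon> * 2 powr \<beta> * (2 powr \<epsilon>)^j))"
  proof (rule suminf_cong)
    fix j
    have "a j * s j powr \<beta> = r powr e * 2 powr (real j * e) * (r powr \<beta> * 2 powr ((real j + 1) * \<beta>))"
      unfolding a_def s_def using r by (simp add: pow2_scale)
    also have "\<dots> = r powr (e + \<beta>) * 2 powr (real j * (e + \<beta>) + \<beta>)"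
      by (simp add: powr_add algebra_simps)
    also have "e + \<beta> = \<epsilon>" unfolding e_def \<epsilon>_def by simp
    also have "2 powr (real j * \<epsilon> + \<beta>) = 2 powr \<beta> * (2 powr \<epsilon>)^j"
      by (simp add: powr_add powr_power mult.commute)
    finally have eq: "a j * s j powr \<beta> = r powr \<epsilon> * 2 powr \<beta> * (2 powr \<epsilon>)^j" by simp
    have "0 \<le> a j" unfolding a_def by simp
    thus "ennreal (a j) * ennreal (s j powr \<beta>) = ennreal (r powr \<epsilon> * 2 powr \<beta> * (2 powr \<epsilon>)^j)"
      by (simp add: ennreal_mult[symmetric] eq)
  qed
  also have "\<dots> = ennreal (\<Sum>j. r powr \<epsilon> * 2 powr \<beta> * (2 powr \<epsilon>)^j)"
  proof -
    have "2 powr \<epsilon> < 1" using eps by (simp add: powr_less_one)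
    hence "summable (\<lambda>j. (2 powr \<epsilon>)^j)" by (intro summable_geometric) simp
    thus ?thesis by (intro suminf_ennreal2) (auto intro!: summable_mult)
  qed
  also have "(\<Sum>j. r powr \<epsilon> * 2 powr \<beta> * (2 powr \<epsilon>)^j) = r powr \<epsilon> * 2 powr \<beta> * (1 / (1 - 2 powr \<epsilon>))"
  proof -
    have "2 powr \<epsilon> < 1" using eps by (simp add: powr_less_one)
    thus ?thesis by (subst suminf_mult) (auto simp: suminf_geometric)
  qed
  finally show ?thesis unfolding e_def n_def \<epsilon>_def by (simp add: field_simps)
qed

lemma kernel_meas2:
  fixes g :: "'a::euclidean_space \<Rightarrow> real" and e r :: real
  assumes g: "g \<in> borel_measurable lborel"
  shows "(\<lambda>(x, y). ennreal (norm (x - y) powr e * indicator {..<r} (norm (x - y)) * g y))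
     \<in> borel_measurable (lborel \<Otimes>\<^sub>M (lborel :: 'a measure))"
  using g by measurable

lemma near_meas:
  fixes g :: "'a::euclidean_space \<Rightarrow> real" and e r :: real
  assumes g: "g \<in> borel_measurable lborel"
  shows "(\<lambda>x. \<integral>\<^sup>+y. ennreal (norm (x - y) powr e * indicator {..<r} (norm (x - y)) * g y) \<partial>lborel)
     \<in> borel_measurable lborel"
  using kernel_meas2[OF g, of e r] by (rule lborel.borel_measurable_nn_integral)

lemma near_tonelli:
  fixes g :: "'a::euclidean_space \<Rightarrow> real" and r :: real
  assumes g: "g \<in> borel_measurable lborel" and gnn: "\<forall>y. 0 \<le> g y" and r: "0 < r"
  shows "(\<integral>\<^sup>+x. (\<integral>\<^sup>+y. ennreal (norm (x - y) powr (1 - real DIM('a)) * indicator {..<r} (norm (x - y)) * g y) \<partial>lborel) \<partial>lborel)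
    \<le> ennreal (unit_ball_vol (DIM('a)) * 2 ^ DIM('a) * r) * (\<integral>\<^sup>+y. ennreal (g y) \<partial>lborel)"
proof -
  define e where "e = 1 - real DIM('a)"
  define c where "c = unit_ball_vol (DIM('a)) * 2 ^ DIM('a) * r"
  have "(\<integral>\<^sup>+x. (\<integral>\<^sup>+y. ennreal (norm (x - y) powr e * indicator {..<r} (norm (x - y)) * g y) \<partial>lborel) \<partial>lborel)
     = (\<integral>\<^sup>+y. (\<integral>\<^sup>+x. ennreal (norm (x - y) powr e * indicator {..<r} (norm (x - y)) * g y) \<partial>lborel) \<partial>lborel)"
    using kernel_meas2[OF g, of e r] by (intro lborel_pair.Fubini') simp
  also have "\<dots> \<le> (\<integral>\<^sup>+y. ennreal c * ennreal (g y) \<partial>lborel)"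
  proof (rule nn_integral_mono)
    fix y :: 'a
    have "(\<integral>\<^sup>+x. ennreal (norm (x - y) powr e * indicator {..<r} (norm (x - y)) * g y) \<partial>lborel)
        = (\<integral>\<^sup>+x. ennreal (g y) * ennreal (norm (x - y) powr e * indicator {..<r} (norm (x - y))) \<partial>lborel)"
      using gnn by (intro nn_integral_cong) (simp add: ennreal_mult[symmetric] ac_simps)
    also have "\<dots> = ennreal (g y) * (\<integral>\<^sup>+x. ennreal (norm (x - y) powr e * indicator {..<r} (norm (x - y))) \<partial>lborel)"
      by (intro nn_integral_cmult) measurable
    also have "\<dots> \<le> ennreal (g y) * ennreal c"
      using kernel_vol[OF r, of y] unfolding e_def c_def by (intro mult_left_mono) auto
    finally show "(\<integral>\<^sup>+x. ennreal (norm (x - y) powr e * indicator {..<r} (norm (x - y)) * g y) \<partial>lborel)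
        \<le> ennreal c * ennreal (g y)" by (simp add: ac_simps)
  qed
  also have "\<dots> = ennreal c * (\<integral>\<^sup>+y. ennreal (g y) \<partial>lborel)"
    using g by (intro nn_integral_cmult) simp
  finally show ?thesis unfolding e_def c_def .
qed

lemma split_bound:
  fixes x :: "'a::euclidean_space" and \<rho> :: "'a \<Rightarrow> real" and \<beta> r \<mu> :: real
  assumes rho: "\<rho> \<in> borel_measurable lborel" and nn: "\<forall>y. 0 \<le> \<rho> y"
    and r: "0 < r" and mu: "0 \<le> \<mu>" and delta: "\<beta> + 1 - real DIM('a) < 0"
    and M: "\<forall>s\<ge>0. maxM \<rho> s x \<le> ennreal (s powr \<beta>)"
  shows "I1 \<rho> x \<le> (\<integral>\<^sup>+y. ennreal (norm (x - y) powr (1 - real DIM('a)) * indicator {..<r} (norm (x - y)) * (\<rho> y * indicator {\<mu><..} (\<rho> y))) \<partial>lborel)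
     + ennreal (\<mu> * (unit_ball_vol (DIM('a)) * 2 ^ DIM('a) * r))
     + ennreal (2 powr \<beta> / (1 - 2 powr (\<beta> + 1 - real DIM('a))) * r powr (\<beta> + 1 - real DIM('a)))"
proof -
  define e where "e = 1 - real DIM('a)"
  define A where "A y = norm (x - y) powr e * indicator {..<r} (norm (x - y)) * (\<rho> y * indicator {\<mu><..} (\<rho> y))" for y
  define B where "B y = norm (x - y) powr e * indicator {..<r} (norm (x - y))" for y
  define C where "C y = norm (x - y) powr e * indicator {r..} (norm (x - y)) * \<rho> y" for y
  have pt: "norm (x - y) powr e * \<rho> y \<le> A y + \<mu> * B y + C y" for y
  proof -
    have d0: "0 \<le> norm (x - y) powr e" by simp
    have "\<rho> y \<le> \<rho> y * indicator {\<mu><..} (\<rho> y) + \<mu>" using mu nn by (auto simp: indicator_def)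
    hence "norm (x - y) powr e * indicator {..<r} (norm (x - y)) * \<rho> y
       \<le> norm (x - y) powr e * indicator {..<r} (norm (x - y)) * (\<rho> y * indicator {\<mu><..} (\<rho> y) + \<mu>)"
      using d0 by (intro mult_left_mono) (auto simp: indicator_def)
    moreover have "norm (x - y) powr e * \<rho> y = norm (x - y) powr e * indicator {..<r} (norm (x - y)) * \<rho> y + C y"
      unfolding C_def by (auto simp: indicator_def)
    ultimately show ?thesis unfolding A_def B_def by (simp add: algebra_simps)
  qed
  have A0: "0 \<le> A y" and B0: "0 \<le> B y" and C0: "0 \<le> C y" for y
    unfolding A_def B_def C_def using nn by (auto simp: indicator_def)
  have "I1 \<rho> x \<le> (\<integral>\<^sup>+y. ennreal (A y) + ennreal \<mu> * ennreal (B y) + ennreal (C y) \<partial>lborel)"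
    unfolding I1_def e_def[symmetric]
  proof (rule nn_integral_mono)
    fix y
    have "ennreal (norm (x - y) powr e * \<rho> y) \<le> ennreal (A y + \<mu> * B y + C y)"
      by (rule ennreal_leI[OF pt])
    also have "\<dots> = ennreal (A y) + ennreal \<mu> * ennreal (B y) + ennreal (C y)"
      using A0[of y] B0[of y] C0[of y] mu by (simp add: ennreal_plus ennreal_mult)
    finally show "ennreal (norm (x - y) powr e * \<rho> y) \<le> ennreal (A y) + ennreal \<mu> * ennreal (B y) + ennreal (C y)" .
  qed
  also have "\<dots> = (\<integral>\<^sup>+y. ennreal (A y) + ennreal \<mu> * ennreal (B y) \<partial>lborel) + (\<integral>\<^sup>+y. ennreal (C y) \<partial>lborel)"
    unfolding A_def B_def C_def using rho by (intro nn_integral_add) auto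
  also have "(\<integral>\<^sup>+y. ennreal (A y) + ennreal \<mu> * ennreal (B y) \<partial>lborel)
     = (\<integral>\<^sup>+y. ennreal (A y) \<partial>lborel) + (\<integral>\<^sup>+y. ennreal \<mu> * ennreal (B y) \<partial>lborel)"
    unfolding A_def B_def using rho by (intro nn_integral_add) auto
  also have "(\<integral>\<^sup>+y. ennreal \<mu> * ennreal (B y) \<partial>lborel) = ennreal \<mu> * (\<integral>\<^sup>+y. ennreal (B y) \<partial>lborel)"
    unfolding B_def by (intro nn_integral_cmult) auto
  finally have 1: "I1 \<rho> x \<le> (\<integral>\<^sup>+y. ennreal (A y) \<partial>lborel) + ennreal \<mu> * (\<integral>\<^sup>+y. ennreal (B y) \<partial>lborel) + (\<integral>\<^sup>+y. ennreal (C y) \<partial>lborel)" .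
  have 2: "(\<integral>\<^sup>+y. ennreal (B y) \<partial>lborel) \<le> ennreal (unit_ball_vol (DIM('a)) * 2 ^ DIM('a) * r)"
    using kernel_vol[OF r, of x] unfolding B_def e_def by (simp add: norm_minus_commute)
  have 3: "(\<integral>\<^sup>+y. ennreal (C y) \<partial>lborel) \<le> ennreal (2 powr \<beta> / (1 - 2 powr (\<beta> + 1 - real DIM('a))) * r powr (\<beta> + 1 - real DIM('a)))"
    using far_bound[OF rho nn r delta M] unfolding C_def e_def .
  have 4: "ennreal \<mu> * (\<integral>\<^sup>+y. ennreal (B y) \<partial>lborel) \<le> ennreal (\<mu> * (unit_ball_vol (DIM('a)) * 2 ^ DIM('a) * r))"
    using mult_left_mono[OF 2, of "ennreal \<mu>"] mu r unit_ball_vol_nonneg[of "real DIM('a)"] by (simp add: ennreal_mult)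
  show ?thesis using order_trans[OF 1 add_mono[OF add_mono[OF order_refl 4] 3]] unfolding A_def e_def .
qed

lemma least_K:
  fixes b w :: real assumes b: "1 < b"
  shows "\<exists>K. \<forall>k::nat. (b^k < w \<longleftrightarrow> k < K)"
proof -
  obtain m where m: "w < b ^ m" using real_arch_pow[OF b] by blast
  define K where "K = (LEAST k. w \<le> b ^ k)"
  have wK: "w \<le> b ^ K" unfolding K_def by (rule LeastI[of _ m]) (use m in simp)
  show ?thesis
  proof (intro exI allI iffI)
    fix k assume "b^k < w"
    show "k < K"
    proof (rule ccontr)
      assume "\<not> k < K"
      hence "b ^ K \<le> b ^ k" using b by (intro power_increasing) auto
      thus False using wK \<open>b^k < w\<close> by simp
    qed
  next
    fix k assume "k < K"
    thus "b^k < w" unfolding K_def using not_less_Least by force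
  qed
qed

lemma count_geom:
  fixes b a w :: real assumes b: "1 < b" and a: "0 < a" and w: "0 < w"
  shows "(\<Sum>k. ennreal ((b^k) powr a * indicator {..<w} (b^k))) \<le> ennreal (b powr a / (b powr a - 1) * w powr a)"
proof -
  obtain K where K: "\<And>k::nat. b^k < w \<longleftrightarrow> k < K" using least_K[OF b] by blast
  define c where "c = b powr a"
  have c1: "1 < c" unfolding c_def using powr_less_mono[OF a b] b by simp 
  have pw: "(b^k) powr a = c ^ k" for k :: nat
  proof -
    have "(b^k) powr a = (b powr real k) powr a" using b by (simp add: powr_realpow)
    also have "\<dots> = b powr (real k * a)" by (simp add: powr_powr)
    also have "\<dots> = c ^ k" unfolding c_def using b by (simp add: powr_power)
    finally show ?thesis .
  qed
  have "(\<Sum>k. ennreal ((b^k) powr a * indicator {..<w} (b^k))) = (\<Sum>k\<in>{..<K}. ennreal ((b^k) powr a * indicator {..<w} (b^k)))"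
    by (rule suminf_finite) (auto simp: K indicator_def)
  also have "\<dots> = ennreal (\<Sum>k<K. c ^ k)"
    using c1 by (subst sum_ennreal[symmetric]) (auto simp: K indicator_def pw intro!: sum.cong)
  finally have E: "(\<Sum>k. ennreal ((b^k) powr a * indicator {..<w} (b^k))) = ennreal (\<Sum>k<K. c ^ k)" .
  have "(\<Sum>k<K. c ^ k) \<le> c / (c - 1) * w powr a"
  proof (cases K)
    case 0 thus ?thesis using c1 w by simp
  next
    case (Suc L)
    have "b ^ L < w" using K[of L] Suc by simp
    hence "(b^L) powr a < w powr a" using a b by (intro powr_less_mono2) auto
    hence cL: "c ^ L < w powr a" by (simp add: pw)
    have "(\<Sum>k<K. c ^ k) = (c ^ K - 1) / (c - 1)" using c1 by (simp add: geometric_sum)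
    also have "\<dots> \<le> c ^ K / (c - 1)" using c1 by (simp add: divide_right_mono)
    also have "\<dots> = c / (c - 1) * c ^ L" using Suc by simp
    also have "\<dots> \<le> c / (c - 1) * w powr a" using cL c1 by (intro mult_left_mono) auto
    finally show ?thesis .
  qed
  thus ?thesis unfolding E c_def by (rule ennreal_leI)
qed

lemma count_log:
  fixes b w :: real assumes b: "1 < b" and w: "0 < w"
  shows "(\<Sum>k. ennreal (indicator {..<w} ((b::real)^k))) \<le> ennreal (1 + max 0 (ln w / ln b))"
proof -
  obtain K where K: "\<And>k::nat. b^k < w \<longleftrightarrow> k < K" using least_K[OF b] by blast
  have "(\<Sum>k. ennreal (indicator {..<w} ((b::real)^k))) = (\<Sum>k\<in>{..<K}. ennreal (indicator {..<w} ((b::real)^k)))"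
    by (rule suminf_finite) (auto simp: K indicator_def)
  also have "\<dots> = ennreal (real K)"
    by (auto simp: K indicator_def ennreal_of_nat_eq_real_of_nat)
  finally have E: "(\<Sum>k. ennreal (indicator {..<w} ((b::real)^k))) = ennreal (real K)" .
  have "real K \<le> 1 + max 0 (ln w / ln b)"
  proof (cases K)
    case 0 thus ?thesis by simp
  next
    case (Suc L)
    have "b ^ L < w" using K[of L] Suc by simp
    hence "ln (b ^ L) < ln w" using b w by (intro ln_less_cancel_iff[THEN iffD2]) auto
    hence "real L * ln b < ln w" using b by (simp add: ln_realpow)
    hence "real L < ln w / ln b" using b by (simp add: field_simps)
    thus ?thesis using Suc by simp
  qed
  thus ?thesis unfolding E by (rule ennreal_leI)
qed

definition Nk :: "('a::euclidean_space \<Rightarrow> real) \<Rightarrow> real \<Rightarrow> real \<Rightarrow> 'a \<Rightarrow> ennreal" where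
  "Nk \<rho> r \<mu> x = (\<integral>\<^sup>+y. ennreal (norm (x - y) powr (1 - real DIM('a)) * indicator {..<r} (norm (x - y)) * (\<rho> y * indicator {\<mu><..} (\<rho> y))) \<partial>lborel)"

lemma level_bound:
  fixes x :: "'a::euclidean_space" and \<rho> :: "'a \<Rightarrow> real" and \<beta> lam :: real
  assumes rho: "\<rho> \<in> borel_measurable lborel" and nn: "\<forall>y. 0 \<le> \<rho> y"
    and delta: "\<beta> + 1 - real DIM('a) < 0"
    and M: "\<forall>s\<ge>0. maxM \<rho> s x \<le> ennreal (s powr \<beta>)"
    and lam0: "0 < lam" and le: "ennreal lam \<le> I1 \<rho> x"
    and r: "0 < r" and rf: "2 powr \<beta> / (1 - 2 powr (\<beta> + 1 - real DIM('a))) * r powr (\<beta> + 1 - real DIM('a)) = lam / 3"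
  defines "c2 \<equiv> unit_ball_vol (DIM('a)) * 2 ^ DIM('a)"
  defines "\<mu> \<equiv> lam / (3 * c2 * r)"
  shows "ennreal lam \<le> 3 * Nk \<rho> r \<mu> x"
proof -
  define \<epsilon> where "\<epsilon> = \<beta> + 1 - real DIM('a)"
  have eps: "\<epsilon> < 0" using delta unfolding \<epsilon>_def .
  have c2: "0 < c2" unfolding c2_def by simp
  have mu: "0 \<le> \<mu>" unfolding \<mu>_def using lam0 c2 r by simp
  have near: "\<mu> * (c2 * r) = lam / 3" unfolding \<mu>_def using c2 r by (simp add: field_simps)
  have "I1 \<rho> x \<le> Nk \<rho> r \<mu> x + ennreal (lam / 3) + ennreal (lam / 3)"
  proof -
    have f': "2 powr \<beta> / (1 - 2 powr (\<beta> + 1 - real DIM('a))) * r powr (\<beta> + 1 - real DIM('a)) = lam / 3"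
      using rf .
    have n': "\<mu> * (unit_ball_vol (DIM('a)) * 2 ^ DIM('a) * r) = lam / 3"
      using near unfolding c2_def by (simp add: mult.assoc)
    show ?thesis using split_bound[OF rho nn r mu delta M] unfolding Nk_def f' n' .
  qed
  with le have L: "ennreal lam \<le> Nk \<rho> r \<mu> x + ennreal (lam / 3) + ennreal (lam / 3)" by (rule order_trans)
  show ?thesis
  proof (cases "Nk \<rho> r \<mu> x")
    case (real t)
    have t0: "0 \<le> t" using real by simp
    have e1: "ennreal (t + lam/3 + lam/3) = ennreal (t + lam/3) + ennreal (lam/3)"
      using t0 lam0 by (intro ennreal_plus) auto
    have e2: "ennreal (t + lam/3) = ennreal t + ennreal (lam/3)"
      using t0 lam0 by (intro ennreal_plus) auto
    have "ennreal lam \<le> ennreal (t + lam/3 + lam/3)" using L real unfolding e1 e2 by (simp only:)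
    hence "lam \<le> t + lam/3 + lam/3" using real lam0 by (subst (asm) ennreal_le_iff) auto
    hence "lam \<le> 3 * t" by simp
    hence "ennreal lam \<le> ennreal (3 * t)" by (rule ennreal_leI)
    thus ?thesis using real by (simp add: ennreal_mult)
  next
    case top thus ?thesis by simp
  qed
qed

lemma inner_gt1:
  fixes b a A B v :: real assumes b: "1 < b" and a: "0 < a" and A: "0 \<le> A" and B: "0 < B" and v: "0 \<le> v"
  shows "(\<Sum>k. ennreal (A * (b^k) powr a * (v * indicator {B * b^k<..} v)))
    \<le> ennreal (A * (b powr a / (b powr a - 1)) * B powr (-a) * v powr (1 + a))"
proof (cases "v = 0")
  case True
  have "(\<lambda>k. ennreal (A * (b^k) powr a * (v * indicator {B * b^k<..} v))) = (\<lambda>k. 0)"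
    using True by (simp add: fun_eq_iff)
  thus ?thesis by simp
next
  case False
  hence v0: "0 < v" using v by simp
  have ind: "indicator {B * b^k<..} v = (indicator {..<v/B} (b^k) :: real)" for k :: nat
    using B by (auto simp: indicator_def field_simps)
  have "(\<Sum>k. ennreal (A * (b^k) powr a * (v * indicator {B * b^k<..} v)))
      = (\<Sum>k. ennreal (A * v) * ennreal ((b^k) powr a * indicator {..<v/B} (b^k)))"
  proof (rule suminf_cong)
    fix k :: nat
    have "A * (b^k) powr a * (v * indicator {B * b^k<..} v) = (A * v) * ((b^k) powr a * indicator {..<v/B} (b^k))"
      unfolding ind by simp
    moreover have "ennreal ((A * v) * ((b^k) powr a * indicator {..<v/B} (b^k))) = ennreal (A * v) * ennreal ((b^k) powr a * indicator {..<v/B} (b^k))"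
      using A v by (intro ennreal_mult) auto
    ultimately show "ennreal (A * (b^k) powr a * (v * indicator {B * b^k<..} v)) = ennreal (A * v) * ennreal ((b^k) powr a * indicator {..<v/B} (b^k))"
      by (simp only:)
  qed
  also have "\<dots> = ennreal (A * v) * (\<Sum>k. ennreal ((b^k) powr a * indicator {..<v/B} (b^k)))"
    by (rule ennreal_suminf_cmult)
  also have "\<dots> \<le> ennreal (A * v) * ennreal (b powr a / (b powr a - 1) * (v/B) powr a)"
    using v0 B by (intro mult_left_mono[OF count_geom[OF b a]]) auto
  also have "\<dots> = ennreal (A * v * (b powr a / (b powr a - 1) * (v/B) powr a))"
  proof -
    have "1 < b powr a" using powr_less_mono[OF a b] b by simp
    thus ?thesis using A v by (intro ennreal_mult[symmetric]) auto
  qed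
  also have "A * v * (b powr a / (b powr a - 1) * (v/B) powr a) = A * (b powr a / (b powr a - 1)) * B powr (-a) * v powr (1 + a)"
    using v0 B by (simp add: powr_divide powr_add powr_minus field_simps)
  finally show ?thesis .
qed

lemma inner_eq1:
  fixes b A B v :: real assumes b: "1 < b" and A: "0 \<le> A" and B: "0 < B" and v: "0 \<le> v"
  shows "(\<Sum>k. ennreal (A * (b^k) powr 0 * (v * indicator {B * b^k<..} v)))
    \<le> ennreal (A * (1 + \<bar>ln B\<bar> / ln b) * v + A / ln b * (v * ln (1 + v)))"
proof (cases "v = 0")
  case True thus ?thesis by (simp add: indicator_def)
next
  case False
  hence v0: "0 < v" using v by simp
  have lb: "0 < ln b" using b by simp
  have ind: "indicator {B * b^k<..} v = (indicator {..<v/B} (b^k) :: real)" for k :: nat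
    using B by (auto simp: indicator_def field_simps)
  have bk: "(b^k) powr 0 = 1" for k :: nat using b by simp
  have "(\<Sum>k. ennreal (A * (b^k) powr 0 * (v * indicator {B * b^k<..} v)))
      = (\<Sum>k. ennreal (A * v) * ennreal (indicator {..<v/B} (b^k)))"
  proof (rule suminf_cong)
    fix k :: nat
    have "A * (b^k) powr 0 * (v * indicator {B * b^k<..} v) = (A * v) * indicator {..<v/B} (b^k)"
      unfolding bk ind by simp
    moreover have "ennreal ((A * v) * indicator {..<v/B} (b^k)) = ennreal (A * v) * ennreal (indicator {..<v/B} (b^k))"
      using A v by (intro ennreal_mult) auto
    ultimately show "ennreal (A * (b^k) powr 0 * (v * indicator {B * b^k<..} v)) = ennreal (A * v) * ennreal (indicator {..<v/B} (b^k))"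
      by (simp only:)
  qed
  also have "\<dots> = ennreal (A * v) * (\<Sum>k. ennreal (indicator {..<v/B} (b^k)))"
    by (rule ennreal_suminf_cmult)
  also have "\<dots> \<le> ennreal (A * v) * ennreal (1 + max 0 (ln (v/B) / ln b))"
    using v0 B by (intro mult_left_mono[OF count_log[OF b]]) auto
  also have "\<dots> = ennreal (A * v * (1 + max 0 (ln (v/B) / ln b)))"
    using A v by (intro ennreal_mult[symmetric]) auto
  finally have E: "(\<Sum>k. ennreal (A * (b^k) powr 0 * (v * indicator {B * b^k<..} v))) \<le> ennreal (A * v * (1 + max 0 (ln (v/B) / ln b)))" .
  have "A * v * (1 + max 0 (ln (v/B) / ln b)) \<le> A * (1 + \<bar>ln B\<bar> / ln b) * v + A / ln b * (v * ln (1 + v))"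
  proof -
    have "ln (v/B) = ln v - ln B" using v0 B by (simp add: ln_div)
    also have "\<dots> \<le> ln (1 + v) + \<bar>ln B\<bar>"
    proof -
      have "ln v \<le> ln (1 + v)" using v0 by simp
      thus ?thesis by linarith
    qed
    finally have "ln (v/B) \<le> ln (1 + v) + \<bar>ln B\<bar>" .
    moreover have "0 \<le> ln (1 + v)" using v0 by simp
    ultimately have "max 0 (ln (v/B) / ln b) \<le> (ln (1 + v) + \<bar>ln B\<bar>) / ln b"
      using lb by (auto simp: divide_right_mono)
    hence "A * v * (1 + max 0 (ln (v/B) / ln b)) \<le> A * v * (1 + (ln (1 + v) + \<bar>ln B\<bar>) / ln b)"
      using A v by (intro mult_left_mono) auto
    also have "\<dots> = A * (1 + \<bar>ln B\<bar> / ln b) * v + A / ln b * (v * ln (1 + v))"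
      using lb by (simp add: field_simps)
    finally show ?thesis .
  qed
  thus ?thesis using E by (meson ennreal_leI order_trans)
qed

lemma p_gt_n:
  fixes N \<gamma> \<alpha> :: real
  assumes dim: "N = 2 \<or> N = 3" and g1: "1 \<le> \<gamma>" and g2: "\<gamma> \<le> N / 2"
    and a1: "0 < \<alpha>" and ga: "gamma_n N \<gamma> - N + 1 + \<alpha> < 0"
  shows "N < \<gamma> * (gamma_n N \<gamma> - N + \<alpha>) / (gamma_n N \<gamma> - N + 1 + \<alpha>)"
proof -
  define \<epsilon> where "\<epsilon> = gamma_n N \<gamma> - N + 1 + \<alpha>"
  have e: "\<epsilon> < 0" using ga unfolding \<epsilon>_def .
  have eq: "gamma_n N \<gamma> - N + \<alpha> = \<epsilon> - 1" unfolding \<epsilon>_def by simp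
  have key: "\<gamma> * (\<epsilon> - 1) < N * \<epsilon>"
    using dim
  proof
    assume N: "N = 2"
    hence "\<gamma> = 1" using g1 g2 by simp
    hence "gamma_n N \<gamma> = 0" using N by (simp add: gamma_n_def)
    thus ?thesis unfolding \<epsilon>_def using N a1 \<open>\<gamma> = 1\<close> by simp
  next
    assume N: "N = 3"
    have g3: "3 - \<gamma> > 0" using g2 N by simp
    have "gamma_n N \<gamma> * (3 - \<gamma>) = 6 - 3 * \<gamma>" using N g3 by (simp add: gamma_n_def field_simps)
    hence "\<epsilon> * (\<gamma> - 3) = \<gamma> - \<alpha> * (3 - \<gamma>)" unfolding \<epsilon>_def using N by (simp add: algebra_simps)
    moreover have "\<alpha> * (3 - \<gamma>) > 0" using a1 g3 by simp
    moreover have "\<gamma> * (\<epsilon> - 1) - N * \<epsilon> = \<epsilon> * (\<gamma> - 3) - \<gamma>" using N by (simp add: algebra_simps)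
    ultimately show ?thesis by linarith
  qed
  show ?thesis unfolding eq \<epsilon>_def[symmetric] using key e by (simp add: neg_less_divide_eq)
qed

lemma smooth_bounded:
  fixes \<psi> :: "'a::euclidean_space \<Rightarrow> real" and R :: real
  assumes sm: "smooth_fun \<psi>" and supp: "closure {x. \<psi> x \<noteq> 0} \<subseteq> ball 0 R"
  shows "\<exists>K>0. \<forall>x. \<bar>\<psi> x\<bar> \<le> K"
proof -
  have "\<forall>x. \<psi> differentiable (at x)" using sm by (cases rule: smooth_fun.cases) auto
  hence cont: "continuous_on UNIV \<psi>"
    by (simp add: continuous_at_imp_continuous_on differentiable_imp_continuous_within)
  define S where "S = closure {x. \<psi> x \<noteq> 0}"
  have "bounded S" unfolding S_def using supp bounded_ball bounded_subset by blast
  hence "compact S" unfolding S_def by (simp add: compact_eq_bounded_closed)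
  hence "compact (\<psi> ` S)" using continuous_on_subset[OF cont, of S] by (intro compact_continuous_image) auto
  hence "bounded (\<psi> ` S)" by (rule compact_imp_bounded)
  then obtain B where B: "\<forall>y\<in>\<psi> ` S. norm y \<le> B" unfolding bounded_iff by blast
  show ?thesis
  proof (intro exI[of _ "max 1 B"] conjI allI)
    fix x
    show "\<bar>\<psi> x\<bar> \<le> max 1 B"
    proof (cases "x \<in> S")
      case True
      hence "norm (\<psi> x) \<le> B" using B by blast
      thus ?thesis by simp
    next
      case False
      hence "\<psi> x = 0" using closure_subset[of "{x. \<psi> x \<noteq> 0}"] unfolding S_def by auto
      thus ?thesis by simp
    qed
  qed simp
qed

theorem lemma3p2:
  fixes \<gamma> \<alpha> C0 R :: real and \<psi> :: "'a::euclidean_space \<Rightarrow> real"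
  assumes dim: "DIM('a) = 2 \<or> DIM('a) = 3"
    and g1: "1 \<le> \<gamma>" and g2: "\<gamma> \<le> real DIM('a) / 2"
    and a1: "0 < \<alpha>" and a2: "\<alpha> < 1"
    and ga: "gamma_n (real DIM('a)) \<gamma> - real DIM('a) + 1 + \<alpha> < 0"
    and psi_smooth: "smooth_fun \<psi>"
    and psi_nonneg: "\<forall>x. 0 \<le> \<psi> x"
    and psi_supp: "closure {x. \<psi> x \<noteq> 0} \<subseteq> ball 0 R"
  shows "(let p = \<gamma> * (gamma_n (real DIM('a)) \<gamma> - real DIM('a) + \<alpha>)
                   / (gamma_n (real DIM('a)) \<gamma> - real DIM('a) + 1 + \<alpha>)
          in p > real DIM('a) \<and>
             (\<exists>C::real. \<forall>\<rho> :: 'a \<Rightarrow> real.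
                \<rho> \<in> borel_measurable lborel \<and> (\<forall>x. 0 \<le> \<rho> x) \<and>
                integrable lborel \<rho> \<and>
                (if \<gamma> > 1
                 then integrable lborel (\<lambda>x. \<rho> x powr \<gamma>) \<and>
                      (\<integral>x. \<rho> x \<partial>lborel) + (\<integral>x. \<rho> x powr \<gamma> \<partial>lborel) powr (1 / \<gamma>) \<le> C0
                 else integrable lborel (\<lambda>x. \<rho> x * ln (1 + \<rho> x)) \<and>
                      (\<integral>x. \<rho> x \<partial>lborel) + (\<integral>x. \<rho> x * ln (1 + \<rho> x) \<partial>lborel) \<le> C0)
                \<longrightarrow>
                Lp_norm_on {x \<in> ball 0 R. \<forall>s \<ge> 0.
                              maxM \<rho> s x \<le> ennreal (s powr (gamma_n (real DIM('a)) \<gamma> + \<alpha>))}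
                           p (I1 (\<lambda>y. \<psi> y * \<rho> y))
                  \<le> ennreal C))"
proof -
  define n where "n = real DIM('a)"
  define gn where "gn = gamma_n n \<gamma>"
  define \<beta> where "\<beta> = gn + \<alpha>"
  define \<epsilon> where "\<epsilon> = \<beta> + 1 - n"
  have eps: "\<epsilon> < 0" using ga unfolding \<epsilon>_def \<beta>_def gn_def n_def by simp
  have beta_raw: "gamma_n (real DIM('a)) \<gamma> + \<alpha> = \<beta>" unfolding \<beta>_def gn_def n_def ..
  have eps_raw: "\<beta> + 1 - real DIM('a) = \<epsilon>" unfolding \<epsilon>_def n_def ..
  define p where "p = \<gamma> * (gamma_n (real DIM('a)) \<gamma> - real DIM('a) + \<alpha>) / (gamma_n (real DIM('a)) \<gamma> - real DIM('a) + 1 + \<alpha>)"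
  have dimr: "real DIM('a) = 2 \<or> real DIM('a) = 3" using dim by auto
  have pn: "real DIM('a) < p" unfolding p_def using dimr g1 g2 a1 ga by (rule p_gt_n)
  have p0: "0 < p" using pn by simp
  define q where "q = 1 - 1 / \<epsilon>"
  have q1: "1 < q" unfolding q_def using eps by (simp add: field_simps)
  have pq: "p = \<gamma> * q"
  proof -
    have "p = \<gamma> * (\<epsilon> - 1) / \<epsilon>" unfolding p_def \<epsilon>_def \<beta>_def gn_def n_def by (simp add: algebra_simps)
    thus ?thesis unfolding q_def using eps by (simp add: field_simps)
  qed
  obtain K where K0: "0 < K" and K: "\<forall>x. \<bar>\<psi> x\<bar> \<le> K" using smooth_bounded[OF psi_smooth psi_supp] by blast
  define c2 where "c2 = unit_ball_vol (DIM('a)) * 2 ^ DIM('a)"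
  have c2: "0 < c2" unfolding c2_def by simp
  define Cf where "Cf = 2 powr \<beta> / (1 - 2 powr \<epsilon>)"
  have Cf: "0 < Cf"
  proof -
    have "2 powr \<epsilon> < 1" using eps by (simp add: powr_less_one)
    thus ?thesis unfolding Cf_def by simp
  qed
  define cc where "cc = (3 * Cf) powr (-1 / \<epsilon>)"
  have cc: "0 < cc" unfolding cc_def using Cf by simp
  define lam where "lam k = 2 powr real k" for k :: nat
  define r where "r k = cc * 2 powr (real k / \<epsilon>)" for k :: nat
  define mu where "mu k = lam k / (3 * c2 * r k)" for k :: nat
  define coef where "coef k = 2 powr ((real k + 1) * p) * 3 / lam k" for k :: nat
  define b where "b = 2 powr q"
  define A where "A = 3 * c2 * cc * 2 powr p"
  define B where "B = 1 / (3 * c2 * cc)"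
  have lam0: "0 < lam k" for k unfolding lam_def by simp
  have r0: "0 < r k" for k unfolding r_def using cc by simp
  have b1: "1 < b" unfolding b_def using q1 by simp
  have A0: "0 \<le> A" unfolding A_def using c2 cc by simp
  have B0: "0 < B" unfolding B_def using c2 cc by simp
  have bk: "b^k = 2 powr (real k * q)" for k unfolding b_def by (simp add: powr_power)
  have rf: "Cf * r k powr \<epsilon> = lam k / 3" for k
  proof -
    have "r k powr \<epsilon> = cc powr \<epsilon> * 2 powr (real k / \<epsilon> * \<epsilon>)" unfolding r_def using cc by (rule pow2_scale)
    also have "real k / \<epsilon> * \<epsilon> = real k" using eps by simp
    also have "cc powr \<epsilon> = (3 * Cf) powr (-1 / \<epsilon> * \<epsilon>)" unfolding cc_def by (simp add: powr_powr)
    also have "-1 / \<epsilon> * \<epsilon> = -1" using eps by simp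
    also have "(3 * Cf) powr (-1) = 1 / (3 * Cf)" using Cf by (simp add: powr_minus_divide)
    finally have "r k powr \<epsilon> = 1 / (3 * Cf) * 2 powr real k" .
    thus ?thesis unfolding lam_def using Cf by simp
  qed
  have key2: "2 powr ((real k + 1) * p) / lam k * 2 powr (real k / \<epsilon>) = 2 powr p * (b^k) powr (\<gamma> - 1)" for k
  proof -
    have e1: "(real k + 1) * p - real k + real k / \<epsilon> = p + real k * q * (\<gamma> - 1)"
      unfolding pq q_def by (simp add: algebra_simps add_divide_distrib[symmetric])
    have "2 powr ((real k + 1) * p) / lam k * 2 powr (real k / \<epsilon>) = 2 powr ((real k + 1) * p - real k + real k / \<epsilon>)"
      unfolding lam_def by (simp add: powr_diff powr_add)
    also have "\<dots> = 2 powr p * 2 powr (real k * q * (\<gamma> - 1))" unfolding e1 by (simp add: powr_add)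
    also have "2 powr (real k * q * (\<gamma> - 1)) = (b^k) powr (\<gamma> - 1)" unfolding bk by (simp add: powr_powr)
    finally show ?thesis .
  qed
  have coef_eq: "coef k * (c2 * r k) = A * (b^k) powr (\<gamma> - 1)" for k
  proof -
    have "coef k * (c2 * r k) = 3 * c2 * cc * (2 powr ((real k + 1) * p) / lam k * 2 powr (real k / \<epsilon>))"
      unfolding coef_def r_def by (simp add: field_simps)
    also have "\<dots> = A * (b^k) powr (\<gamma> - 1)" unfolding key2 A_def by (simp add: ac_simps)
    finally show ?thesis .
  qed
  have mu_eq: "mu k = B * b^k" for k
  proof -
    have e1: "real k - real k / \<epsilon> = real k * q" unfolding q_def by (simp add: algebra_simps)
    have "lam k / 2 powr (real k / \<epsilon>) = 2 powr (real k - real k / \<epsilon>)" unfolding lam_def by (simp add: powr_diff)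
    also have "\<dots> = b ^ k" unfolding e1 bk ..
    finally have "lam k / 2 powr (real k / \<epsilon>) = b ^ k" .
    moreover have "mu k = B * (lam k / 2 powr (real k / \<epsilon>))" unfolding mu_def r_def B_def by (simp add: field_simps)
    ultimately show ?thesis by simp
  qed
  define Cg where "Cg = A * (b powr (\<gamma> - 1) / (b powr (\<gamma> - 1) - 1)) * B powr (-(\<gamma> - 1))"
  define A1 where "A1 = A * (1 + \<bar>ln B\<bar> / ln b)"
  define A2 where "A2 = A / ln b"
  define GB where "GB = Cg * \<bar>C0\<bar> powr \<gamma> + (A1 + A2) * \<bar>C0\<bar>"
  define JB where "JB = K powr p * (unit_ball_vol (DIM('a)) * \<bar>R\<bar> ^ DIM('a) + GB)"
  have lnb: "0 < ln b" using b1 by simp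
  have Cg0: "0 \<le> Cg"
  proof -
    have "1 \<le> b powr (\<gamma> - 1)" using b1 g1 by (intro ge_one_powr_ge_zero) auto
    hence "0 \<le> b powr (\<gamma> - 1) / (b powr (\<gamma> - 1) - 1)" by simp
    thus ?thesis unfolding Cg_def using A0 by (intro mult_nonneg_nonneg) auto
  qed
  have A10: "0 \<le> A1" unfolding A1_def using A0 lnb by simp
  have A20: "0 \<le> A2" unfolding A2_def using A0 lnb by simp
  have GB0: "0 \<le> GB" unfolding GB_def using Cg0 A10 A20 by simp
  have JB0: "0 \<le> JB" unfolding JB_def using GB0 K0 by simp
  show ?thesis
    unfolding Let_def p_def[symmetric] beta_raw
  proof (intro conjI exI[of _ "JB powr (1/p)"] allI impI)
    show "real DIM('a) < p" by (rule pn)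
    fix \<rho> :: "'a \<Rightarrow> real"
    assume H: "\<rho> \<in> borel_measurable lborel \<and> (\<forall>x. 0 \<le> \<rho> x) \<and> integrable lborel \<rho> \<and>
         (if 1 < \<gamma> then integrable lborel (\<lambda>x. \<rho> x powr \<gamma>) \<and>
             (\<integral>x. \<rho> x \<partial>lborel) + (\<integral>x. \<rho> x powr \<gamma> \<partial>lborel) powr (1 / \<gamma>) \<le> C0
          else integrable lborel (\<lambda>x. \<rho> x * ln (1 + \<rho> x)) \<and>
             (\<integral>x. \<rho> x \<partial>lborel) + (\<integral>x. \<rho> x * ln (1 + \<rho> x) \<partial>lborel) \<le> C0)"
    have rho: "\<rho> \<in> borel_measurable lborel" and nn: "\<forall>y. 0 \<le> \<rho> y" and int: "integrable lborel \<rho>"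
      using H by auto
    have rhoB[measurable]: "\<rho> \<in> borel_measurable borel" using rho by simp
    define \<Omega> where "\<Omega> = {x \<in> ball 0 R. \<forall>s\<ge>0. maxM \<rho> s x \<le> ennreal (s powr \<beta>)}"
    define G where "G x = (\<Sum>k. ennreal (coef k) * Nk \<rho> (r k) (mu k) x)" for x
    have delta: "\<beta> + 1 - real DIM('a) < 0" using eps unfolding eps_raw .
    have gmeas: "(\<lambda>y. \<rho> y * indicator {m<..} (\<rho> y)) \<in> borel_measurable lborel" for m :: real
      using rho by measurable
    have gnn: "\<forall>y. 0 \<le> \<rho> y * indicator {m<..} (\<rho> y)" for m :: real
      using nn by (simp add: indicator_def)
    have Nmeas: "(\<lambda>x. Nk \<rho> rr m x) \<in> borel_measurable lborel" for rr m
      unfolding Nk_def by (rule near_meas[OF gmeas])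
    have NmeasB[measurable]: "Nk \<rho> rr m \<in> borel_measurable borel" for rr m
      using Nmeas[of rr m] by simp
    have Gmeas: "G \<in> borel_measurable lborel"
      unfolding G_def using Nmeas by measurable
    have irho: "(\<integral>\<^sup>+y. ennreal (\<rho> y) \<partial>lborel) < \<infinity>"
      using integrableD(2)[OF int] by (simp add: less_top)
    have Mx: "\<forall>s\<ge>0. maxM \<rho> s x \<le> ennreal (s powr \<beta>)" if "x \<in> \<Omega>" for x
      using that unfolding \<Omega>_def by auto
    have pw: "ennreal (enn2real (I1 \<rho> x) powr p) \<le> 1 + G x" if x: "x \<in> \<Omega>" and fin: "I1 \<rho> x \<noteq> \<infinity>" for x
    proof -
      define T where "T = enn2real (I1 \<rho> x)"
      have IT: "I1 \<rho> x = ennreal T" unfolding T_def using fin by (simp add: ennreal_enn2real less_top)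
      have T0: "0 \<le> T" by (simp add: T_def)
      have G1: "G x \<le> 1 + G x" by simp
      show ?thesis
      proof (cases "T \<le> 1")
        case True
        have "T powr p \<le> 1 powr p" using T0 True p0 by (intro powr_mono2) auto
        hence "T powr p \<le> 1" by simp
        hence "ennreal (T powr p) \<le> ennreal 1" by (rule ennreal_leI)
        also have "ennreal 1 \<le> 1 + G x" by simp
        finally show ?thesis unfolding T_def .
      next
        case False
        obtain j where j1: "2 powr real j \<le> T" and j2: "T < 2 powr (real j + 1)"
          using dyadic_ex[of T] False by auto
        have "T powr p \<le> (2 powr (real j + 1)) powr p" using T0 j2 p0 by (intro powr_mono2) auto
        also have "\<dots> = 2 powr ((real j + 1) * p)" by (simp add: powr_powr)
        also have "\<dots> = coef j / 3 * lam j" unfolding coef_def using lam0[of j] by simp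
        finally have Tp: "T powr p \<le> coef j / 3 * lam j" .
        have rfj: "2 powr \<beta> / (1 - 2 powr (\<beta> + 1 - real DIM('a))) * r j powr (\<beta> + 1 - real DIM('a)) = lam j / 3"
          using rf[of j] unfolding Cf_def eps_raw .
        have lej: "ennreal (lam j) \<le> I1 \<rho> x" unfolding IT lam_def using j1 by (rule ennreal_leI)
        have lev: "ennreal (lam j) \<le> 3 * Nk \<rho> (r j) (mu j) x"
          using level_bound[OF rho nn delta Mx[OF x] lam0[of j] lej r0[of j] rfj] unfolding mu_def c2_def .
        have coef0: "0 \<le> coef j" unfolding coef_def using lam0[of j] by simp
        have e3: "ennreal (coef j / 3) * 3 = ennreal (coef j)"
        proof -
          have "ennreal (coef j / 3 * 3) = ennreal (coef j / 3) * ennreal 3" using coef0 by (intro ennreal_mult) auto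
          thus ?thesis by simp
        qed
        have "ennreal (T powr p) \<le> ennreal (coef j / 3 * lam j)" by (rule ennreal_leI[OF Tp])
        also have "\<dots> = ennreal (coef j / 3) * ennreal (lam j)" using coef0 lam0[of j] by (intro ennreal_mult) auto
        also have "\<dots> \<le> ennreal (coef j / 3) * (3 * Nk \<rho> (r j) (mu j) x)" by (rule mult_left_mono[OF lev]) simp
        also have "\<dots> = ennreal (coef j) * Nk \<rho> (r j) (mu j) x" by (simp only: mult.assoc[symmetric] e3)
        also have "\<dots> \<le> G x" unfolding G_def by (rule ennreal_term_le_suminf)
        also note G1
        finally show ?thesis unfolding T_def .
      qed
    qed
    have AEfin: "AE x in lborel. x \<in> \<Omega> \<longrightarrow> I1 \<rho> x \<noteq> \<infinity>"
    proof -
      have "(\<integral>\<^sup>+x. Nk \<rho> 1 0 x \<partial>lborel)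
          \<le> ennreal (unit_ball_vol (DIM('a)) * 2 ^ DIM('a) * 1) * (\<integral>\<^sup>+y. ennreal (\<rho> y * indicator {0<..} (\<rho> y)) \<partial>lborel)"
        unfolding Nk_def by (rule near_tonelli[OF gmeas gnn]) simp
      also have "\<dots> < \<infinity>"
      proof -
        have "(\<integral>\<^sup>+y. ennreal (\<rho> y * indicator {0<..} (\<rho> y)) \<partial>lborel) \<le> (\<integral>\<^sup>+y. ennreal (\<rho> y) \<partial>lborel)"
          using nn by (intro nn_integral_mono ennreal_leI) (auto simp: indicator_def)
        hence "(\<integral>\<^sup>+y. ennreal (\<rho> y * indicator {0<..} (\<rho> y)) \<partial>lborel) < \<infinity>" using irho by (rule le_less_trans)
        thus ?thesis by (simp add: ennreal_mult_less_top)
      qed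
      finally have "(\<integral>\<^sup>+x. Nk \<rho> 1 0 x \<partial>lborel) \<noteq> \<infinity>" by simp
      hence "AE x in lborel. Nk \<rho> 1 0 x \<noteq> \<infinity>" by (rule nn_integral_noteq_infinite[OF Nmeas])
      thus ?thesis
      proof (rule eventually_mono, intro impI)
        fix x assume Nf: "Nk \<rho> 1 0 x \<noteq> \<infinity>" and x: "x \<in> \<Omega>"
        have le: "I1 \<rho> x \<le> Nk \<rho> 1 0 x + ennreal (0 * (unit_ball_vol (DIM('a)) * 2 ^ DIM('a) * 1))
           + ennreal (2 powr \<beta> / (1 - 2 powr (\<beta> + 1 - real DIM('a))) * 1 powr (\<beta> + 1 - real DIM('a)))"
          using split_bound[OF rho nn zero_less_one order_refl delta Mx[OF x]] unfolding Nk_def .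
        have "Nk \<rho> 1 0 x + ennreal (0 * (unit_ball_vol (DIM('a)) * 2 ^ DIM('a) * 1))
           + ennreal (2 powr \<beta> / (1 - 2 powr (\<beta> + 1 - real DIM('a))) * 1 powr (\<beta> + 1 - real DIM('a))) < \<infinity>"
          using Nf by (simp add: less_top[symmetric])
        with le show "I1 \<rho> x \<noteq> \<infinity>" by (simp add: le_less_trans less_top)
      qed
    qed
    have psiI: "I1 (\<lambda>y. \<psi> y * \<rho> y) x \<le> ennreal K * I1 \<rho> x" for x
    proof -
      have "I1 (\<lambda>y. \<psi> y * \<rho> y) x \<le> (\<integral>\<^sup>+y. ennreal K * ennreal (norm (x - y) powr (1 - real DIM('a)) * \<rho> y) \<partial>lborel)"
        unfolding I1_def
      proof (rule nn_integral_mono)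
        fix y
        have "norm (x - y) powr (1 - real DIM('a)) * (\<psi> y * \<rho> y) \<le> K * (norm (x - y) powr (1 - real DIM('a)) * \<rho> y)"
        proof -
          have "\<psi> y * \<rho> y \<le> K * \<rho> y" using K nn by (intro mult_right_mono) (auto simp: abs_le_iff)
          hence "norm (x - y) powr (1 - real DIM('a)) * (\<psi> y * \<rho> y) \<le> norm (x - y) powr (1 - real DIM('a)) * (K * \<rho> y)"
            by (intro mult_left_mono) auto
          thus ?thesis by (simp only: ac_simps)
        qed
        hence "ennreal (norm (x - y) powr (1 - real DIM('a)) * (\<psi> y * \<rho> y)) \<le> ennreal (K * (norm (x - y) powr (1 - real DIM('a)) * \<rho> y))"
          by (rule ennreal_leI)
        also have "\<dots> = ennreal K * ennreal (norm (x - y) powr (1 - real DIM('a)) * \<rho> y)"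
          using K0 nn by (intro ennreal_mult) auto
        finally show "ennreal (norm (x - y) powr (1 - real DIM('a)) * (\<psi> y * \<rho> y)) \<le> ennreal K * ennreal (norm (x - y) powr (1 - real DIM('a)) * \<rho> y)" .
      qed
      also have "\<dots> = ennreal K * I1 \<rho> x" unfolding I1_def by (intro nn_integral_cmult) measurable
      finally show ?thesis .
    qed
    have chain: "(\<integral>\<^sup>+x. G x \<partial>lborel) \<le> (\<integral>\<^sup>+y. (\<Sum>k. ennreal (A * (b^k) powr (\<gamma> - 1) * (\<rho> y * indicator {B * b^k<..} (\<rho> y)))) \<partial>lborel)"
    proof -
      have "(\<integral>\<^sup>+x. G x \<partial>lborel) = (\<Sum>k. \<integral>\<^sup>+x. ennreal (coef k) * Nk \<rho> (r k) (mu k) x \<partial>lborel)"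
        unfolding G_def using Nmeas by (intro nn_integral_suminf) measurable
      also have "\<dots> = (\<Sum>k. ennreal (coef k) * \<integral>\<^sup>+x. Nk \<rho> (r k) (mu k) x \<partial>lborel)"
        using Nmeas by (intro suminf_cong nn_integral_cmult) measurable
      also have "\<dots> \<le> (\<Sum>k. ennreal (coef k) * (ennreal (c2 * r k) * (\<integral>\<^sup>+y. ennreal (\<rho> y * indicator {mu k<..} (\<rho> y)) \<partial>lborel)))"
      proof (intro ennreal_suminf_mono mult_left_mono)
        fix k
        show "(\<integral>\<^sup>+x. Nk \<rho> (r k) (mu k) x \<partial>lborel) \<le> ennreal (c2 * r k) * (\<integral>\<^sup>+y. ennreal (\<rho> y * indicator {mu k<..} (\<rho> y)) \<partial>lborel)"
        proof -
          have c2r: "c2 * r k = unit_ball_vol (DIM('a)) * 2 ^ DIM('a) * r k" unfolding c2_def ..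
          show ?thesis unfolding Nk_def c2r by (rule near_tonelli[OF gmeas gnn r0])
        qed
      qed simp
      also have "\<dots> = (\<Sum>k. \<integral>\<^sup>+y. ennreal (A * (b^k) powr (\<gamma> - 1) * (\<rho> y * indicator {B * b^k<..} (\<rho> y))) \<partial>lborel)"
      proof (rule suminf_cong)
        fix k
        have cf0: "0 \<le> coef k" unfolding coef_def using lam0[of k] by simp
        have "ennreal (coef k) * (ennreal (c2 * r k) * (\<integral>\<^sup>+y. ennreal (\<rho> y * indicator {mu k<..} (\<rho> y)) \<partial>lborel))
            = ennreal (coef k * (c2 * r k)) * (\<integral>\<^sup>+y. ennreal (\<rho> y * indicator {mu k<..} (\<rho> y)) \<partial>lborel)"
          using cf0 c2 r0[of k] by (simp add: ennreal_mult mult.assoc)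
        also have "\<dots> = ennreal (A * (b^k) powr (\<gamma> - 1)) * (\<integral>\<^sup>+y. ennreal (\<rho> y * indicator {B * b^k<..} (\<rho> y)) \<partial>lborel)"
          unfolding coef_eq mu_eq ..
        also have "\<dots> = (\<integral>\<^sup>+y. ennreal (A * (b^k) powr (\<gamma> - 1)) * ennreal (\<rho> y * indicator {B * b^k<..} (\<rho> y)) \<partial>lborel)"
          using gmeas by (intro nn_integral_cmult[symmetric]) measurable
        also have "\<dots> = (\<integral>\<^sup>+y. ennreal (A * (b^k) powr (\<gamma> - 1) * (\<rho> y * indicator {B * b^k<..} (\<rho> y))) \<partial>lborel)"
          using A0 gnn by (intro nn_integral_cong ennreal_mult[symmetric]) auto
        finally show "ennreal (coef k) * (ennreal (c2 * r k) * (\<integral>\<^sup>+y. ennreal (\<rho> y * indicator {mu k<..} (\<rho> y)) \<partial>lborel))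
            = (\<integral>\<^sup>+y. ennreal (A * (b^k) powr (\<gamma> - 1) * (\<rho> y * indicator {B * b^k<..} (\<rho> y))) \<partial>lborel)" .
      qed
      also have "\<dots> = (\<integral>\<^sup>+y. (\<Sum>k. ennreal (A * (b^k) powr (\<gamma> - 1) * (\<rho> y * indicator {B * b^k<..} (\<rho> y)))) \<partial>lborel)"
        by (intro nn_integral_suminf[symmetric]) measurable
      finally show ?thesis .
    qed
    have int0: "0 \<le> (\<integral>x. \<rho> x \<partial>lborel)" using nn by (intro integral_nonneg_AE) auto
    have intG: "(\<integral>\<^sup>+x. G x \<partial>lborel) \<le> ennreal GB"
    proof (cases "1 < \<gamma>")
      case True
      have Hg: "integrable lborel (\<lambda>x. \<rho> x powr \<gamma>)" and
           Hc: "(\<integral>x. \<rho> x \<partial>lborel) + (\<integral>x. \<rho> x powr \<gamma> \<partial>lborel) powr (1 / \<gamma>) \<le> C0"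
        using H True by auto
      define I0 where "I0 = (\<integral>x. \<rho> x powr \<gamma> \<partial>lborel)"
      have I00: "0 \<le> I0" unfolding I0_def by (intro integral_nonneg_AE) auto
      have "I0 powr (1 / \<gamma>) \<le> C0" using Hc int0 unfolding I0_def by linarith
      hence "(I0 powr (1 / \<gamma>)) powr \<gamma> \<le> \<bar>C0\<bar> powr \<gamma>" using True by (intro powr_mono2) auto
      hence I0le: "I0 \<le> \<bar>C0\<bar> powr \<gamma>" using I00 True by (simp add: powr_powr)
      have a: "0 < \<gamma> - 1" using True by simp
      have "(\<integral>\<^sup>+y. (\<Sum>k. ennreal (A * (b^k) powr (\<gamma> - 1) * (\<rho> y * indicator {B * b^k<..} (\<rho> y)))) \<partial>lborel)
          \<le> (\<integral>\<^sup>+y. ennreal (Cg * \<rho> y powr \<gamma>) \<partial>lborel)"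
      proof (rule nn_integral_mono)
        fix y
        have "1 + (\<gamma> - 1) = \<gamma>" by simp
        thus "(\<Sum>k. ennreal (A * (b^k) powr (\<gamma> - 1) * (\<rho> y * indicator {B * b^k<..} (\<rho> y)))) \<le> ennreal (Cg * \<rho> y powr \<gamma>)"
          using inner_gt1[OF b1 a A0 B0, of "\<rho> y"] nn unfolding Cg_def by simp
      qed
      also have "\<dots> = ennreal (\<integral>y. Cg * \<rho> y powr \<gamma> \<partial>lborel)"
        using Hg Cg0 by (intro nn_integral_eq_integral) auto
      also have "(\<integral>y. Cg * \<rho> y powr \<gamma> \<partial>lborel) = Cg * I0" unfolding I0_def by simp
      finally have "(\<integral>\<^sup>+x. G x \<partial>lborel) \<le> ennreal (Cg * I0)" using chain by (rule order_trans[rotated])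
      also have "Cg * I0 \<le> GB" unfolding GB_def using I0le Cg0 A10 A20
        by (intro add_increasing2 mult_left_mono) auto
      finally show ?thesis by (simp add: ennreal_leI)
    next
      case False
      hence g: "\<gamma> = 1" using g1 by simp
      have Hl: "integrable lborel (\<lambda>x. \<rho> x * ln (1 + \<rho> x))" and
           Hc: "(\<integral>x. \<rho> x \<partial>lborel) + (\<integral>x. \<rho> x * ln (1 + \<rho> x) \<partial>lborel) \<le> C0"
        using H False by auto
      define I1' where "I1' = (\<integral>x. \<rho> x * ln (1 + \<rho> x) \<partial>lborel)"
      have I10: "0 \<le> I1'" unfolding I1'_def using nn by (intro integral_nonneg_AE) auto
      have "(\<integral>\<^sup>+y. (\<Sum>k. ennreal (A * (b^k) powr (\<gamma> - 1) * (\<rho> y * indicator {B * b^k<..} (\<rho> y)))) \<partial>lborel)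
          \<le> (\<integral>\<^sup>+y. ennreal (A1 * \<rho> y + A2 * (\<rho> y * ln (1 + \<rho> y))) \<partial>lborel)"
      proof (rule nn_integral_mono)
        fix y
        show "(\<Sum>k. ennreal (A * (b^k) powr (\<gamma> - 1) * (\<rho> y * indicator {B * b^k<..} (\<rho> y)))) \<le> ennreal (A1 * \<rho> y + A2 * (\<rho> y * ln (1 + \<rho> y)))"
          using inner_eq1[OF b1 A0 B0, of "\<rho> y"] nn unfolding g A1_def A2_def by simp
      qed
      also have "\<dots> = ennreal (\<integral>y. A1 * \<rho> y + A2 * (\<rho> y * ln (1 + \<rho> y)) \<partial>lborel)"
        using Hl int A10 A20 nn by (intro nn_integral_eq_integral) auto
      also have "(\<integral>y. A1 * \<rho> y + A2 * (\<rho> y * ln (1 + \<rho> y)) \<partial>lborel) = A1 * (\<integral>y. \<rho> y \<partial>lborel) + A2 * I1'"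
        unfolding I1'_def using Hl int by simp
      finally have "(\<integral>\<^sup>+x. G x \<partial>lborel) \<le> ennreal (A1 * (\<integral>y. \<rho> y \<partial>lborel) + A2 * I1')" using chain by (rule order_trans[rotated])
      also have "A1 * (\<integral>y. \<rho> y \<partial>lborel) + A2 * I1' \<le> GB"
      proof -
        have "(\<integral>y. \<rho> y \<partial>lborel) \<le> \<bar>C0\<bar>" "I1' \<le> \<bar>C0\<bar>" using Hc int0 I10 unfolding I1'_def by linarith+
        hence "A1 * (\<integral>y. \<rho> y \<partial>lborel) + A2 * I1' \<le> (A1 + A2) * \<bar>C0\<bar>"
          using A10 A20 by (simp add: distrib_right add_mono mult_left_mono)
        moreover have "0 \<le> Cg * \<bar>C0\<bar> powr \<gamma>" using Cg0 by simp
        ultimately show ?thesis unfolding GB_def by linarith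
      qed
      finally show ?thesis by (simp add: ennreal_leI)
    qed
    show "Lp_norm_on {x \<in> ball 0 R. \<forall>s\<ge>0. maxM \<rho> s x \<le> ennreal (s powr \<beta>)} p (I1 (\<lambda>y. \<psi> y * \<rho> y)) \<le> ennreal (JB powr (1 / p))"
      unfolding \<Omega>_def[symmetric]
    proof -
      define F where "F x = I1 (\<lambda>y. \<psi> y * \<rho> y) x" for x
      have Ffin: "F x < \<infinity>" if "I1 \<rho> x \<noteq> \<infinity>" for x
      proof -
        have "F x \<le> ennreal K * I1 \<rho> x" unfolding F_def by (rule psiI)
        also have "\<dots> < \<infinity>" using that by (simp add: ennreal_mult_less_top less_top)
        finally show ?thesis .
      qed
      have AE2: "AE x in lborel. x \<in> \<Omega> \<longrightarrow> F x < \<infinity>"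
        using AEfin by (rule eventually_mono) (use Ffin in blast)
      have pwF: "ennreal (enn2real (F x) powr p) \<le> ennreal (K powr p) * (1 + G x)"
        if x: "x \<in> \<Omega>" and fin: "I1 \<rho> x \<noteq> \<infinity>" for x
      proof -
        define T where "T = enn2real (I1 \<rho> x)"
        have IT: "I1 \<rho> x = ennreal T" unfolding T_def using fin by (simp add: ennreal_enn2real less_top)
        have T0: "0 \<le> T" by (simp add: T_def)
        have "F x \<le> ennreal K * ennreal T" unfolding F_def IT[symmetric] by (rule psiI)
        also have "\<dots> = ennreal (K * T)" using K0 T0 by (simp add: ennreal_mult)
        finally have "enn2real (F x) \<le> K * T" using K0 T0 by (intro enn2real_leI) auto
        hence "enn2real (F x) powr p \<le> (K * T) powr p" using p0 by (intro powr_mono2) auto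
        also have "\<dots> = K powr p * T powr p" using K0 T0 by (simp add: powr_mult)
        finally have "ennreal (enn2real (F x) powr p) \<le> ennreal (K powr p) * ennreal (T powr p)"
          using K0 by (simp add: ennreal_mult[symmetric] ennreal_leI)
        also have "\<dots> \<le> ennreal (K powr p) * (1 + G x)"
          using pw[OF x fin] unfolding T_def by (rule mult_left_mono) simp
        finally show ?thesis .
      qed
      define J where "J = (\<integral>\<^sup>+x. ennreal (enn2real (F x) powr p) * indicator \<Omega> x \<partial>lborel)"
      have "J \<le> (\<integral>\<^sup>+x. ennreal (K powr p) * (indicator (ball 0 R) x + G x) \<partial>lborel)"
        unfolding J_def
      proof (rule nn_integral_mono_AE)
        show "AE x in lborel. ennreal (enn2real (F x) powr p) * indicator \<Omega> x \<le> ennreal (K powr p) * (indicator (ball 0 R) x + G x)"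
          using AEfin
        proof (rule eventually_mono)
          fix x assume a: "x \<in> \<Omega> \<longrightarrow> I1 \<rho> x \<noteq> \<infinity>"
          show "ennreal (enn2real (F x) powr p) * indicator \<Omega> x \<le> ennreal (K powr p) * (indicator (ball 0 R) x + G x)"
          proof (cases "x \<in> \<Omega>")
            case True
            hence "x \<in> ball 0 R" unfolding \<Omega>_def by simp
            thus ?thesis using pwF[OF True] a True by simp
          qed simp
        qed
      qed
      also have "\<dots> = ennreal (K powr p) * (emeasure lborel (ball (0::'a) R) + (\<integral>\<^sup>+x. G x \<partial>lborel))"
      proof -
        have "(\<integral>\<^sup>+x. ennreal (K powr p) * (indicator (ball 0 R) x + G x) \<partial>lborel)
            = ennreal (K powr p) * (\<integral>\<^sup>+x. indicator (ball 0 R) x + G x \<partial>lborel)"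
          using Gmeas by (intro nn_integral_cmult borel_measurable_add borel_measurable_indicator) auto
        also have "(\<integral>\<^sup>+x. indicator (ball 0 R) x + G x \<partial>lborel) = emeasure lborel (ball (0::'a) R) + (\<integral>\<^sup>+x. G x \<partial>lborel)"
        proof -
          have indm: "(indicator (ball (0::'a) R) :: 'a \<Rightarrow> ennreal) \<in> borel_measurable lborel"
            by (intro borel_measurable_indicator) simp
          have ii: "(\<integral>\<^sup>+x. (indicator (ball (0::'a) R) x :: ennreal) \<partial>lborel) = emeasure lborel (ball (0::'a) R)"
            by (intro nn_integral_indicator) simp
          show ?thesis using nn_integral_add[OF indm Gmeas] unfolding ii .
        qed
        finally show ?thesis .
      qed
      also have "\<dots> \<le> ennreal (K powr p) * (ennreal (unit_ball_vol (DIM('a)) * \<bar>R\<bar> ^ DIM('a)) + ennreal GB)"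
      proof (intro mult_left_mono add_mono intG)
        have "emeasure lborel (ball (0::'a) R) \<le> emeasure lborel (cball (0::'a) \<bar>R\<bar>)"
          by (intro emeasure_mono) auto
        also have "\<dots> = ennreal (unit_ball_vol (DIM('a)) * \<bar>R\<bar> ^ DIM('a))" by (intro emeasure_cball) simp
        finally show "emeasure lborel (ball (0::'a) R) \<le> ennreal (unit_ball_vol (DIM('a)) * \<bar>R\<bar> ^ DIM('a))" .
      qed simp
      also have "\<dots> = ennreal JB" unfolding JB_def using GB0 by (simp add: ennreal_mult ennreal_plus)
      finally have JJB: "J \<le> ennreal JB" .
      have Jfin: "J < \<infinity>" using JJB by (simp add: le_less_trans)
      have AE3: "AE x in lborel. x \<in> \<Omega> \<longrightarrow> F x < \<infinity>" by (rule AE2)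
      have "enn2real J \<le> JB" using JJB JB0 by (intro enn2real_leI)
      hence "enn2real J powr (1 / p) \<le> JB powr (1 / p)" using p0 by (intro powr_mono2) auto
      hence fin2: "ennreal (enn2real J powr (1 / p)) \<le> ennreal (JB powr (1 / p))" by (rule ennreal_leI)
      have c: "(AE x in lborel. x \<in> \<Omega> \<longrightarrow> I1 (\<lambda>y. \<psi> y * \<rho> y) x < \<infinity>) \<and>
          (\<integral>\<^sup>+x. ennreal (enn2real (I1 (\<lambda>y. \<psi> y * \<rho> y) x) powr p) * indicator \<Omega> x \<partial>lborel) < \<infinity>"
        using AE3 Jfin unfolding J_def F_def by simp
      have eq: "Lp_norm_on \<Omega> p (I1 (\<lambda>y. \<psi> y * \<rho> y)) = ennreal (enn2real J powr (1 / p))"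
        unfolding Lp_norm_on_def Let_def J_def F_def by (subst if_P[OF c]) (rule refl)
      have "Lp_norm_on \<Omega> p (I1 (\<lambda>y. \<psi> y * \<rho> y)) \<le> ennreal (JB powr (1 / p))"
        unfolding eq by (rule fin2)
      thus "Lp_norm_on \<Omega> p (I1 (\<lambda>y. \<psi> y * \<rho> y)) \<le> ennreal (JB powr (1 / p))" .
    qed
  qed
qed

end
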